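(* Let $\lambda$ be a partition of $d$ with at most $n$ parts, padded with zeros to length $n$, and let $\nu$ be its reduction. Then $|N_\lambda|=|N_\nu|$. Moreover, $\mathcal{M}_{n,\lambda}=\mathcal{M}_{n,\nu}$ in $\mathbb{P}^{|N_\nu|-1}$, where the coordinates are identified by the bijection $N_\lambda\to N_\nu$ that replaces each entry of an index vector by the corresponding entry of $\nu$, as described below.
   Context: Work over $\mathbb{C}$. Reduction: pad $\lambda$ with zeros to length $n$. Let the distinct values occurring in the padded $\lambda$ (including $0$ if present) have multiplicities $k_0\ge k_1\ge\cdots\ge k_s$, and let $v_j$ denote the value with multiplicity $k_j$. The reduction of $\lambda$ is $$\nu=(\underbrace{s,\ldots,s}_{k_s},\underbrace{s-1,\ldots,s-1}_{k_{s-1}},\ldots,\underbrace{1,\ldots,1}_{k_1},\underbrace{0,\ldots,0}_{k_0}).$$ For example, both $(8,5,5,4)$ and $(7,7,3,0)$ (with $n=4$) have reduction $(2,1,0,0)$. The coordinate bijection replaces each entry $v_j$ of an index vector by $j$. For a vector $\kappa\in\mathbb{Z}_{\ge0}^n$ (such as the padded $\lambda$ or $\nu$), $N_\kappa$ is the set of all rearrangements $(i_1,\ldots,i_n)$ of $\kappa$; equivalently, the index vectors whose multiset of nonzero entries equals the nonzero parts of $\kappa$. The variety $\mathcal{M}_{n,\kappa}\subset\mathbb{P}^{|N_\kappa|-1}$, with coordinates $m_{i_1\cdots i_n}$ for $(i_1,\ldots,i_n)\in N_\kappa$, is the Zariski closure of the image of the monomial map $(\mu_{ki})\mapsto(\mu_{1i_1}\cdots\mu_{ni_n})_{(i_1,\ldots,i_n)\in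 N_\kappa}$, with the convention $\mu_{k0}=1$. *)

theory Defs
  imports Complex_Main "HOL-Library.Poly_Mapping" "HOL-Library.Multiset"
begin

definition Nset :: "nat \<Rightarrow> nat list \<Rightarrow> nat list set" where
  "Nset n kappa = {is. length is = n \<and> mset is = mset kappa}"

text \<open>Points of the ambient projective space are represented by (nonzero)
  coordinate vectors in the affine cone: functions on index vectors vanishing
  outside N_kappa.\<close>

text \<open>Polynomials in the variables indexed by nat list, with complex
  coefficients: finitely supported maps from monomials (exponent vectors) to
  coefficients.\<close>
type_synonym cpoly = "(nat list \<Rightarrow>\<^sub>0 nat) \<Rightarrow>\<^sub>0 complex"

definition peval :: "cpoly \<Rightarrow> (nat list \<Rightarrow> complex) \<Rightarrow> complex" where
  "peval p x = (\<Sum>m\<in>Poly_Mapping.keys p. Poly_Mapping.lookup p m * (\<Prod>v\<in>Poly_Mapping.keys m. x v ^ (Poly_Mapping.lookup m v)))"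

definition homogeneous :: "cpoly \<Rightarrow> bool" where
  "homogeneous p \<longleftrightarrow> (\<exists>D. \<forall>m::nat list \<Rightarrow>\<^sub>0 nat\<in>Poly_Mapping.keys p. (\<Sum>v\<in>Poly_Mapping.keys m. Poly_Mapping.lookup m v) = (D::nat))"

definition proj_zariski_closure :: "nat list set \<Rightarrow> (nat list \<Rightarrow> complex) set \<Rightarrow> (nat list \<Rightarrow> complex) set" where
  "proj_zariski_closure N S =
     {x. (\<forall>i. i \<notin> N \<longrightarrow> x i = 0) \<and> x \<noteq> (\<lambda>_. 0) \<and>
         (\<forall>p. homogeneous p \<longrightarrow> (\<forall>s\<in>S. peval p s = 0) \<longrightarrow> peval p x = 0)}"

definition monomial_point :: "nat \<Rightarrow> nat list \<Rightarrow> (nat \<Rightarrow> nat \<Rightarrow> complex) \<Rightarrow> nat list \<Rightarrow> complex" where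
  "monomial_point n kappa mu is =
     (if is \<in> Nset n kappa then (\<Prod>k<n. (if is ! k = 0 then 1 else mu k (is ! k))) else 0)"

definition M_var :: "nat \<Rightarrow> nat list \<Rightarrow> (nat list \<Rightarrow> complex) set" where
  "M_var n kappa = proj_zariski_closure (Nset n kappa)
     {x. (\<exists>mu. x = monomial_point n kappa mu) \<and> x \<noteq> (\<lambda>_. 0)}"

definition reduction_labeling :: "nat list \<Rightarrow> (nat \<Rightarrow> nat) \<Rightarrow> bool" where
  "reduction_labeling lam f \<longleftrightarrow>
     inj_on f (set lam) \<and> f ` set lam = {0..<card (set lam)} \<and>
     (\<forall>u\<in>set lam. \<forall>v\<in>set lam. f u \<le> f v \<longrightarrow> count_list lam v \<le> count_list lam u)"

definition reduction :: "nat list \<Rightarrow> (nat \<Rightarrow> nat) \<Rightarrow> nat list" where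
  "reduction lam f = rev (sort (map f lam))"

end

theory Submission
  imports Defs
begin


lemma perm_extend:
  fixes h :: "'a \<Rightarrow> 'a"
  assumes "finite A" "inj_on h A"
  shows "\<exists>\<pi>. bij \<pi> \<and> (\<forall>x\<in>A. \<pi> x = h x)"
  using assms
proof (induction A rule: finite_induct)
  case empty
  then show ?case by (intro exI[of _ id]) (auto simp: bij_def)
next
  case (insert a A)
  then obtain \<pi> where pi: "bij \<pi>" "\<forall>x\<in>A. \<pi> x = h x" by auto
  define sw where "sw = (\<lambda>x. if x = \<pi> a then h a else if x = h a then \<pi> a else x)"
  have "sw \<circ> sw = id" unfolding sw_def by (auto simp: fun_eq_iff)
  then have bs: "bij sw" by (metis o_bij)
  have "\<forall>x\<in>insert a A. (sw \<circ> \<pi>) x = h x"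
  proof
    fix x assume x: "x \<in> insert a A"
    show "(sw \<circ> \<pi>) x = h x"
    proof (cases "x = a")
      case True then show ?thesis by (simp add: sw_def)
    next
      case False
      then have xA: "x \<in> A" using x by auto
      have "\<pi> x \<noteq> \<pi> a" using False pi(1) by (metis bij_is_inj injD)
      moreover have "h x \<noteq> h a" using insert.prems False x by (auto simp: inj_on_def)
      ultimately show ?thesis using pi(2) xA by (simp add: sw_def)
    qed
  qed
  then show ?case using bs pi(1) bij_comp by blast
qed

lemma peval_scale:
  assumes "homogeneous p"
  shows "\<exists>D. \<forall>c x. peval p (\<lambda>v. c * x v) = c ^ D * peval p x"
proof -
  obtain D where D: "\<forall>m\<in>Poly_Mapping.keys p. (\<Sum>v\<in>Poly_Mapping.keys m. Poly_Mapping.lookup m v) = D"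
    using assms unfolding homogeneous_def by blast
  have "peval p (\<lambda>v. c * x v) = c ^ D * peval p x" for c x
  proof -
    have "peval p (\<lambda>v. c * x v) = (\<Sum>m\<in>Poly_Mapping.keys p. c ^ D * (Poly_Mapping.lookup p m * (\<Prod>v\<in>Poly_Mapping.keys m. x v ^ (Poly_Mapping.lookup m v))))"
      unfolding peval_def
    proof (rule sum.cong)
      fix m assume m: "m \<in> Poly_Mapping.keys p"
      have "(\<Prod>v\<in>Poly_Mapping.keys m. (c * x v) ^ (Poly_Mapping.lookup m v))
          = (\<Prod>v\<in>Poly_Mapping.keys m. c ^ (Poly_Mapping.lookup m v)) * (\<Prod>v\<in>Poly_Mapping.keys m. x v ^ (Poly_Mapping.lookup m v))"
        by (simp add: power_mult_distrib prod.distrib)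
      also have "(\<Prod>v\<in>Poly_Mapping.keys m. c ^ (Poly_Mapping.lookup m v)) = c ^ D"
        using D m by (simp add: power_sum[symmetric])
      finally show "Poly_Mapping.lookup p m * (\<Prod>v\<in>Poly_Mapping.keys m. (c * x v) ^ (Poly_Mapping.lookup m v)) = c ^ D * (Poly_Mapping.lookup p m * (\<Prod>v\<in>Poly_Mapping.keys m. x v ^ (Poly_Mapping.lookup m v)))"
        by simp
    qed simp
    also have "\<dots> = c ^ D * peval p x" unfolding peval_def by (simp add: sum_distrib_left)
    finally show ?thesis .
  qed
  then show ?thesis by blast
qed

lemma peval_continuous:
  assumes "\<And>v. continuous F (\<lambda>t. X t v)"
  shows "continuous F (\<lambda>t. peval p (X t))"
  unfolding peval_def by (intro continuous_intros assms)

lemma peval_rename: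
  fixes \<tau> :: "nat list \<Rightarrow> nat list"
  assumes "bij \<tau>" "homogeneous p"
  shows "\<exists>q. homogeneous q \<and> (\<forall>z. peval q z = peval p (z \<circ> \<tau>))"
proof -
  have injt: "inj \<tau>" using assms bij_is_inj by auto
  define ti where "ti = inv \<tau>"
  have tit: "ti (\<tau> v) = v" for v unfolding ti_def using injt by simp
  have tti: "\<tau> (ti v) = v" for v unfolding ti_def using assms(1) by (simp add: bij_is_surj surj_f_inv_f)
  have injti: "inj ti" by (metis injI tti)
  define mk :: "(nat list \<Rightarrow>\<^sub>0 nat) \<Rightarrow> (nat list \<Rightarrow>\<^sub>0 nat)" where "mk = Poly_Mapping.map_key \<tau>"
  define mk' :: "(nat list \<Rightarrow>\<^sub>0 nat) \<Rightarrow> (nat list \<Rightarrow>\<^sub>0 nat)" where "mk' = Poly_Mapping.map_key ti"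
  have lk: "Poly_Mapping.lookup (mk m) v = Poly_Mapping.lookup m (\<tau> v)" for m v
    unfolding mk_def using injt by (simp add: map_key.rep_eq)
  have lk': "Poly_Mapping.lookup (mk' m) v = Poly_Mapping.lookup m (ti v)" for m v
    unfolding mk'_def using injti by (simp add: map_key.rep_eq)
  have mkmk': "mk (mk' m) = m" for m by (rule poly_mapping_eqI) (simp add: lk lk' tit)
  have mk'mk: "mk' (mk m) = m" for m by (rule poly_mapping_eqI) (simp add: lk lk' tti)
  have injmk: "inj mk" by (metis injI mk'mk)
  have injmk': "inj mk'" by (metis injI mkmk')
  define q where "q = Poly_Mapping.map_key mk p"
  have lq: "Poly_Mapping.lookup q m = Poly_Mapping.lookup p (mk m)" for m
    unfolding q_def using injmk by (simp add: map_key.rep_eq)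
  have kq: "Poly_Mapping.keys q = mk' ` Poly_Mapping.keys p"
    unfolding q_def using injmk by (auto simp: keys_map_key image_iff mkmk' intro: mk'mk[symmetric])
  have km': "Poly_Mapping.keys (mk' m) = \<tau> ` Poly_Mapping.keys m" for m
    unfolding mk'_def using injti by (auto simp: keys_map_key image_iff tit) (metis tti)
  have prodeq: "(\<Prod>u\<in>Poly_Mapping.keys (mk' m). z u ^ Poly_Mapping.lookup (mk' m) u)
      = (\<Prod>v\<in>Poly_Mapping.keys m. z (\<tau> v) ^ Poly_Mapping.lookup m v)" for m and z :: "nat list \<Rightarrow> complex"
    unfolding km' by (subst prod.reindex) (auto simp: inj_on_def lk' tit dest: injD[OF injt])
  have sumeq: "(\<Sum>u\<in>Poly_Mapping.keys (mk' m). Poly_Mapping.lookup (mk' m) u)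
      = (\<Sum>v\<in>Poly_Mapping.keys m. Poly_Mapping.lookup m v)" for m
    unfolding km' by (subst sum.reindex) (auto simp: inj_on_def lk' tit dest: injD[OF injt])
  have "homogeneous q"
    using assms(2) unfolding homogeneous_def kq by (auto simp: sumeq)
  moreover have "peval q z = peval p (z \<circ> \<tau>)" for z
    unfolding peval_def kq
    by (subst sum.reindex) (auto simp: inj_on_def lq mkmk' prodeq dest: injD[OF injmk'])
  ultimately show ?thesis by blast
qed



definition Gpt :: "nat list set \<Rightarrow> nat \<Rightarrow> (nat \<Rightarrow> nat \<Rightarrow> complex) \<Rightarrow> nat list \<Rightarrow> complex" where
  "Gpt N n w is = (if is \<in> N then (\<Prod>k<n. w k (is ! k)) else 0)"

lemma closure_eq:
  assumes "\<And>p. homogeneous p \<Longrightarrow> (\<forall>s\<in>S. peval p s = 0) \<longleftrightarrow> (\<forall>s\<in>T. peval p s = 0)"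
  shows "proj_zariski_closure N S = proj_zariski_closure N T"
  unfolding proj_zariski_closure_def using assms by blast

lemma ev_nonzero: "eventually (\<lambda>t. a + t \<noteq> (0::complex)) (at 0)"
proof (cases "a = 0")
  case True
  then show ?thesis unfolding eventually_at by (intro exI[of _ 1]) auto
next
  case False
  show ?thesis unfolding eventually_at
  proof (intro exI[of _ "norm a"] conjI ballI impI allI)
    show "0 < norm a" using False by simp
    fix x :: complex assume "x \<noteq> 0 \<and> dist x 0 < norm a"
    then have "norm x < norm a" by simp
    then show "a + x \<noteq> 0" by (metis add.commute add_eq_0_iff less_irrefl norm_minus_cancel)
  qed
qed

lemma isCont_if_const: "isCont (\<lambda>x::complex. if b then x else 0) a"
  by (cases b) auto

lemma key:
  assumes "N \<noteq> {}"
  shows "proj_zariski_closure N {x. (\<exists>w. (\<forall>k<n. w k c = 1) \<and> x = Gpt N n w) \<and> x \<noteq> (\<lambda>_. 0)}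
       = proj_zariski_closure N {x. (\<exists>w. x = Gpt N n w) \<and> x \<noteq> (\<lambda>_. 0)}"
  (is "proj_zariski_closure N ?S = proj_zariski_closure N ?T")
proof (rule closure_eq)
  fix p :: cpoly assume hp: "homogeneous p"
  show "(\<forall>s\<in>?S. peval p s = 0) \<longleftrightarrow> (\<forall>s\<in>?T. peval p s = 0)"
  proof
    assume "\<forall>s\<in>?T. peval p s = 0" then show "\<forall>s\<in>?S. peval p s = 0" by blast
  next
    assume vS: "\<forall>s\<in>?S. peval p s = 0"
    obtain D where D: "\<forall>c x. peval p (\<lambda>v. c * x v) = c ^ D * peval p x"
      using peval_scale[OF hp] by blast
    define one where "one = Gpt N n (\<lambda>_ _. 1)"
    obtain i where i: "i \<in> N" using assms by blast
    have "one i = 1" unfolding one_def Gpt_def using i by simp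
    then have "one \<noteq> (\<lambda>_. 0)" by (metis zero_neq_one)
    then have "one \<in> ?S" unfolding one_def by (intro CollectI conjI exI[of _ "\<lambda>_ _. 1"]) auto
    then have p1: "peval p one = 0" using vS by blast
    have p0: "peval p (\<lambda>_. 0) = 0" using D[rule_format, of 0 one] p1 by simp
    show "\<forall>s\<in>?T. peval p s = 0"
    proof
      fix s assume "s \<in> ?T"
      then obtain w where sw: "s = Gpt N n w" by blast
      define wt where "wt t = (\<lambda>k v. w k v + (if v = c then t else 0))" for t
      define g where "g t = peval p (Gpt N n (wt t))" for t
      have cont: "continuous (at 0) g"
        unfolding g_def
      proof (rule peval_continuous)
        fix v show "continuous (at 0) (\<lambda>t. Gpt N n (wt t) v)"
          unfolding Gpt_def wt_def by (cases "v \<in> N") (auto intro!: continuous_intros isCont_if_const)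
      qed
      have zero_t: "g t = 0" if nz: "\<forall>k<n. w k c + t \<noteq> 0" for t
      proof -
        define C where "C = (\<Prod>k<n. wt t k c)"
        define w' where "w' k v = wt t k v / wt t k c" for k v
        have wtc: "wt t k c = w k c + t" for k unfolding wt_def by simp
        have eq: "Gpt N n (wt t) = (\<lambda>v. C * Gpt N n w' v)"
        proof
          fix v show "Gpt N n (wt t) v = C * Gpt N n w' v"
          proof (cases "v \<in> N")
            case True
            have "(\<Prod>k<n. wt t k (v ! k)) = (\<Prod>k<n. wt t k c * w' k (v ! k))"
              by (rule prod.cong) (auto simp: w'_def wtc nz)
            then show ?thesis using True unfolding Gpt_def C_def by (simp add: prod.distrib)
          qed (simp add: Gpt_def)
        qed
        have "peval p (Gpt N n w') = 0"
        proof (cases "Gpt N n w' = (\<lambda>_. 0)")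
          case True then show ?thesis using p0 by simp
        next
          case False
          have "\<forall>k<n. w' k c = 1" unfolding w'_def using nz wtc by simp
          then have "Gpt N n w' \<in> ?S" using False by blast
          then show ?thesis using vS by blast
        qed
        then show ?thesis unfolding g_def eq using D by simp
      qed
      have "eventually (\<lambda>t. \<forall>k\<in>{..<n}. w k c + t \<noteq> 0) (at 0)"
        by (intro eventually_ball_finite ballI ev_nonzero) auto
      then have "eventually (\<lambda>t. g t = 0) (at (0::complex))"
        by (rule eventually_mono) (simp add: zero_t)
      then have l0: "(g \<longlongrightarrow> 0) (at 0)" by (rule tendsto_eventually)
      have "(g \<longlongrightarrow> g 0) (at 0)" using cont by (simp add: continuous_at)
      then have "g 0 = 0" using l0 tendsto_unique[OF at_neq_bot] by blast
      moreover have "wt 0 = w" unfolding wt_def by (auto simp: fun_eq_iff)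
      ultimately show "peval p s = 0" unfolding g_def sw by simp
    qed
  qed
qed

lemma transport:
  fixes \<tau> :: "nat list \<Rightarrow> nat list"
  assumes bt: "bij \<tau>" and AB: "\<And>x. x \<in> B \<longleftrightarrow> \<tau> x \<in> A"
    and supp: "\<And>s i. s \<in> S \<Longrightarrow> i \<notin> A \<Longrightarrow> s i = 0"
  defines "\<Phi> \<equiv> (\<lambda>y is. if is \<in> B then y (\<tau> is) else 0)"
  shows "proj_zariski_closure B (\<Phi> ` S) = \<Phi> ` proj_zariski_closure A S"
proof -
  have injt: "inj \<tau>" using bt bij_is_inj by auto
  define ti where "ti = inv \<tau>"
  have tit: "ti (\<tau> v) = v" for v unfolding ti_def using injt by simp
  have tti: "\<tau> (ti v) = v" for v unfolding ti_def using bt by (simp add: bij_is_surj surj_f_inv_f)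
  have bti: "bij ti" unfolding ti_def using bt by (simp add: bij_imp_bij_inv)
  have ABi: "ti j \<in> B \<longleftrightarrow> j \<in> A" for j using AB[of "ti j"] tti by simp
  have Phi_o: "\<Phi> y = y \<circ> \<tau>" if "\<And>i. i \<notin> A \<Longrightarrow> y i = 0" for y
    unfolding \<Phi>_def using that AB by (auto simp: fun_eq_iff)
  show ?thesis
  proof
    show "proj_zariski_closure B (\<Phi> ` S) \<subseteq> \<Phi> ` proj_zariski_closure A S"
    proof
      fix x assume x: "x \<in> proj_zariski_closure B (\<Phi> ` S)"
      define y where "y = x \<circ> ti"
      have xs: "\<And>i. i \<notin> B \<Longrightarrow> x i = 0" and xnz: "x \<noteq> (\<lambda>_. 0)"
        and xp: "\<And>p. homogeneous p \<Longrightarrow> (\<forall>s\<in>\<Phi> ` S. peval p s = 0) \<Longrightarrow> peval p x = 0"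
        using x unfolding proj_zariski_closure_def by auto
      have "\<Phi> y = x" unfolding \<Phi>_def y_def using xs by (auto simp: fun_eq_iff tit)
      moreover have "y \<in> proj_zariski_closure A S"
        unfolding proj_zariski_closure_def
      proof (intro CollectI conjI allI impI)
        fix i assume "i \<notin> A" then show "y i = 0" unfolding y_def using xs ABi by simp
      next
        obtain i where "x i \<noteq> 0" using xnz by auto
        then have "y (\<tau> i) \<noteq> 0" unfolding y_def by (simp add: tit)
        then show "y \<noteq> (\<lambda>_. 0)" by auto
      next
        fix p assume hp: "homogeneous p" and vp: "\<forall>s\<in>S. peval p s = 0"
        obtain q where hq: "homogeneous q" and q: "\<forall>z. peval q z = peval p (z \<circ> ti)"
          using peval_rename[OF bti hp] by blast
        have "\<forall>s\<in>\<Phi> ` S. peval q s = 0"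
        proof
          fix s' assume "s' \<in> \<Phi> ` S"
          then obtain s where s: "s \<in> S" "s' = \<Phi> s" by blast
          have "\<Phi> s \<circ> ti = s" unfolding \<Phi>_def using supp[OF s(1)] ABi by (auto simp: fun_eq_iff tti)
          then show "peval q s' = 0" using q vp s by simp
        qed
        then have "peval q x = 0" using xp hq by blast
        then show "peval p y = 0" using q unfolding y_def by simp
      qed
      ultimately show "x \<in> \<Phi> ` proj_zariski_closure A S" by blast
    qed
  next
    show "\<Phi> ` proj_zariski_closure A S \<subseteq> proj_zariski_closure B (\<Phi> ` S)"
    proof
      fix x assume "x \<in> \<Phi> ` proj_zariski_closure A S"
      then obtain y where y: "y \<in> proj_zariski_closure A S" and xy: "x = \<Phi> y" by blast
      have ys: "\<And>i. i \<notin> A \<Longrightarrow> y i = 0" and ynz: "y \<noteq> (\<lambda>_. 0)"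
        and yp: "\<And>p. homogeneous p \<Longrightarrow> (\<forall>s\<in>S. peval p s = 0) \<Longrightarrow> peval p y = 0"
        using y unfolding proj_zariski_closure_def by auto
      have xo: "x = y \<circ> \<tau>" using xy Phi_o ys by blast
      show "x \<in> proj_zariski_closure B (\<Phi> ` S)"
        unfolding proj_zariski_closure_def
      proof (intro CollectI conjI allI impI)
        fix i assume "i \<notin> B" then show "x i = 0" unfolding xy \<Phi>_def by simp
      next
        obtain j where "y j \<noteq> 0" using ynz by auto
        then have "x (ti j) \<noteq> 0" unfolding xo by (simp add: tti)
        then show "x \<noteq> (\<lambda>_. 0)" by auto
      next
        fix p assume hp: "homogeneous p" and vp: "\<forall>s\<in>\<Phi> ` S. peval p s = 0"
        obtain q where hq: "homogeneous q" and q: "\<forall>z. peval q z = peval p (z \<circ> \<tau>)"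
          using peval_rename[OF bt hp] by blast
        have "\<forall>s\<in>S. peval q s = 0"
        proof
          fix s assume s: "s \<in> S"
          have "\<Phi> s = s \<circ> \<tau>" using Phi_o supp[OF s] by blast
          then show "peval q s = 0" using q vp s by (metis image_eqI)
        qed
        then have "peval q y = 0" using yp hq by blast
        then show "peval p x = 0" using q xo by simp
      qed
    qed
  qed
qed



lemma mp_Gpt: "monomial_point n kappa mu = Gpt (Nset n kappa) n (\<lambda>k v. if v = 0 then 1 else mu k v)"
  unfolding monomial_point_def Gpt_def by (auto simp: fun_eq_iff)

lemma Gpt_mp: assumes "\<forall>k<n. w k 0 = 1"
  shows "Gpt (Nset n kappa) n w = monomial_point n kappa w"
  unfolding monomial_point_def Gpt_def using assms by (auto simp: fun_eq_iff intro!: prod.cong)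

theorem lemma4p2:
  fixes n d :: nat and lam :: "nat list" and f :: "nat \<Rightarrow> nat"
  assumes "length lam = n"
    and "sorted_wrt (\<ge>) lam"
    and "sum_list lam = d"
    and "reduction_labeling lam f"
  shows "card (Nset n lam) = card (Nset n (reduction lam f)) \<and>
         bij_betw (map f) (Nset n lam) (Nset n (reduction lam f)) \<and>
         M_var n lam =
           (\<lambda>y is. if is \<in> Nset n lam then y (map f is) else 0) ` M_var n (reduction lam f)"
proof -
  define B where "B = Nset n lam"
  define nu where "nu = reduction lam f"
  define A where "A = Nset n nu"
  have injf: "inj_on f (set lam)" and imf: "f ` set lam = {0..<card (set lam)}"
    using assms(4) unfolding reduction_labeling_def by auto
  have msnu: "mset nu = image_mset f (mset lam)" unfolding nu_def reduction_def by simp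
  define g where "g = the_inv_into (set lam) f"
  have gf: "g (f v) = v" if "v \<in> set lam" for v unfolding g_def using injf that by (simp add: the_inv_into_f_f)
  have fg: "f (g j) = j" if "j \<in> f ` set lam" for j unfolding g_def using injf that by (simp add: f_the_inv_into_f)
  have Bmem: "set is = set lam" "length is = n" if "is \<in> B" for "is"
    using that unfolding B_def Nset_def by (auto dest: mset_eq_setD)
  have lamB: "lam \<in> B" unfolding B_def Nset_def using assms(1) by simp
  have Amem: "set js = f ` set lam" "length js = n" if "js \<in> A" for js
  proof -
    have "set js = set nu" using that unfolding A_def Nset_def by (auto dest: mset_eq_setD)
    also have "\<dots> = set_mset (image_mset f (mset lam))" by (metis msnu set_mset_mset)
    finally show "set js = f ` set lam" by simp
    show "length js = n" using that unfolding A_def Nset_def by simp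
  qed
  have bijB: "bij_betw (map f) B A"
  proof (rule bij_betw_imageI)
    show "inj_on (map f) B"
      by (rule inj_onI) (metis Bmem(1) injf map_inj_on sup.idem)
    show "map f ` B = A"
    proof
      show "map f ` B \<subseteq> A"
      proof
        fix js assume "js \<in> map f ` B"
        then obtain "is" where "is \<in> B" "js = map f is" by blast
        then show "js \<in> A" unfolding A_def B_def Nset_def using msnu by auto
      qed
      show "A \<subseteq> map f ` B"
      proof
        fix js assume js: "js \<in> A"
        have mfg: "map f (map g js) = js" using Amem(1)[OF js] by (auto intro!: map_idI fg)
        have "mset (map g js) = image_mset g (mset nu)" using js unfolding A_def Nset_def by simp
        also have "\<dots> = image_mset (g \<circ> f) (mset lam)" unfolding msnu by (simp add: multiset.map_comp)
        also have "\<dots> = image_mset id (mset lam)" by (rule image_mset_cong) (simp add: gf)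
        also have "\<dots> = mset lam" by simp
        finally have "map g js \<in> B" unfolding B_def Nset_def using Amem(2)[OF js] assms(1) by simp
        then show "js \<in> map f ` B" using mfg by (metis image_eqI)
      qed
    qed
  qed
  have finB: "finite B"
  proof (rule finite_subset)
    show "B \<subseteq> {xs. set xs \<subseteq> set lam \<and> length xs = n}" using Bmem by auto
  qed (rule finite_lists_length_eq, simp)
  obtain \<tau> where bt: "bij \<tau>" and tB: "\<forall>x\<in>B. \<tau> x = map f x"
    using perm_extend[OF finB bij_betw_imp_inj_on[OF bijB]] by blast
  have AB: "x \<in> B \<longleftrightarrow> \<tau> x \<in> A" for x
  proof
    assume "x \<in> B" then show "\<tau> x \<in> A" using tB bijB bij_betwE by fastforce
  next
    assume "\<tau> x \<in> A"
    then obtain y where "y \<in> B" "\<tau> x = map f y" using bijB by (metis bij_betw_imp_surj_on imageE)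
    then have "\<tau> x = \<tau> y" using tB by simp
    then show "x \<in> B" using \<open>y \<in> B\<close> bt by (metis bij_is_inj injD)
  qed
  define \<Phi> :: "(nat list \<Rightarrow> complex) \<Rightarrow> nat list \<Rightarrow> complex" where "\<Phi> = (\<lambda>y is. if is \<in> B then y (\<tau> is) else 0)"
  have Phi_eq: "(\<lambda>y is. if is \<in> Nset n lam then y (map f is) else 0) = \<Phi>"
    unfolding \<Phi>_def B_def[symmetric] using tB by (auto simp: fun_eq_iff)
  obtain c where hc: "n > 0 \<Longrightarrow> c \<in> set lam \<and> f c = 0"
  proof (cases "n > 0")
    case True
    then have "lam \<noteq> []" using assms(1) by auto
    then have "card (set lam) > 0" by (simp add: card_gt_0_iff)
    then have "0 \<in> f ` set lam" using imf by auto
    then obtain c where "c \<in> set lam" "f c = 0" by (metis imageE)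
    then show ?thesis using that[of c] by blast
  next
    case False
    then show ?thesis using that[of 0] by blast
  qed
  define S_nu where "S_nu = {x. (\<exists>mu. x = monomial_point n nu mu) \<and> x \<noteq> (\<lambda>_. 0)}"
  define S_lam where "S_lam = {x. (\<exists>mu. x = monomial_point n lam mu) \<and> x \<noteq> (\<lambda>_. 0)}"
  have suppS: "s i = 0" if "s \<in> S_nu" "i \<notin> A" for s i
    using that unfolding S_nu_def A_def monomial_point_def by auto
  have S_lam_eq: "S_lam = {x. (\<exists>w. (\<forall>k<n. w k 0 = 1) \<and> x = Gpt B n w) \<and> x \<noteq> (\<lambda>_. 0)}"
    unfolding S_lam_def B_def
  proof (intro Collect_cong iffI conjI)
    fix x assume a: "(\<exists>mu. x = monomial_point n lam mu) \<and> x \<noteq> (\<lambda>_. 0)"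
    show "\<exists>w. (\<forall>k<n. w k 0 = 1) \<and> x = Gpt (Nset n lam) n w"
    proof -
      obtain mu where "x = monomial_point n lam mu" using a by blast
      then show ?thesis unfolding mp_Gpt by (intro exI[of _ "\<lambda>k v. if v = 0 then 1 else mu k v"]) simp
    qed
  next
    fix x assume "(\<exists>w. (\<forall>k<n. w k 0 = 1) \<and> x = Gpt (Nset n lam) n w) \<and> x \<noteq> (\<lambda>_. 0)"
    then show "\<exists>mu. x = monomial_point n lam mu" by (auto simp: Gpt_mp)
  qed auto
  have Phi_nz: "\<Phi> y \<noteq> (\<lambda>_. 0) \<longleftrightarrow> y \<noteq> (\<lambda>_. 0)" if ys: "\<And>i. i \<notin> A \<Longrightarrow> y i = 0" for y
  proof
    assume "y \<noteq> (\<lambda>_. 0)"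
    then obtain j where j: "y j \<noteq> 0" by auto
    then have "j \<in> A" using ys by blast
    obtain i where i: "j = \<tau> i" using bt by (metis bij_is_surj surjD)
    then have "i \<in> B" using AB \<open>j \<in> A\<close> by simp
    then have "\<Phi> y i \<noteq> 0" using i j unfolding \<Phi>_def by simp
    then show "\<Phi> y \<noteq> (\<lambda>_. 0)" by auto
  qed (auto simp: \<Phi>_def)
  have Phi_mp: "\<Phi> (monomial_point n nu mu) = Gpt B n (\<lambda>k v. if f v = 0 then 1 else mu k (f v))" for mu
  proof
    fix "is" show "\<Phi> (monomial_point n nu mu) is = Gpt B n (\<lambda>k v. if f v = 0 then 1 else mu k (f v)) is"
    proof (cases "is \<in> B")
      case True
      then have "\<tau> is \<in> A" "\<tau> is = map f is" using AB tB by auto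
      then show ?thesis using True Bmem(2)[OF True] unfolding \<Phi>_def Gpt_def monomial_point_def A_def
        by (auto intro!: prod.cong)
    qed (simp add: \<Phi>_def Gpt_def)
  qed
  have PhiS: "\<Phi> ` S_nu = {x. (\<exists>w. (\<forall>k<n. w k c = 1) \<and> x = Gpt B n w) \<and> x \<noteq> (\<lambda>_. 0)}"
  proof
    show "\<Phi> ` S_nu \<subseteq> {x. (\<exists>w. (\<forall>k<n. w k c = 1) \<and> x = Gpt B n w) \<and> x \<noteq> (\<lambda>_. 0)}"
    proof
      fix x assume "x \<in> \<Phi> ` S_nu"
      then obtain y mu where y: "y \<in> S_nu" "x = \<Phi> y" "y = monomial_point n nu mu" unfolding S_nu_def by blast
      have "y \<noteq> (\<lambda>_. 0)" using y(1) unfolding S_nu_def by blast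
      moreover have "\<Phi> y \<noteq> (\<lambda>_. 0) \<longleftrightarrow> y \<noteq> (\<lambda>_. 0)" by (rule Phi_nz) (rule suppS[OF y(1)])
      ultimately have "x \<noteq> (\<lambda>_. 0)" using y(2) by simp
      moreover have "x = Gpt B n (\<lambda>k v. if f v = 0 then 1 else mu k (f v))" using y(2,3) Phi_mp by simp
      moreover have "\<forall>k<n. (if f c = 0 then 1 else mu k (f c)) = 1" using hc by auto
      ultimately show "x \<in> {x. (\<exists>w. (\<forall>k<n. w k c = 1) \<and> x = Gpt B n w) \<and> x \<noteq> (\<lambda>_. 0)}"
        by (intro CollectI conjI exI[of _ "\<lambda>k v. if f v = 0 then 1 else mu k (f v)"]) auto
    qed
    show "{x. (\<exists>w. (\<forall>k<n. w k c = 1) \<and> x = Gpt B n w) \<and> x \<noteq> (\<lambda>_. 0)} \<subseteq> \<Phi> ` S_nu"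
    proof
      fix x assume "x \<in> {x. (\<exists>w. (\<forall>k<n. w k c = 1) \<and> x = Gpt B n w) \<and> x \<noteq> (\<lambda>_. 0)}"
      then obtain w where w: "\<forall>k<n. w k c = 1" "x = Gpt B n w" "x \<noteq> (\<lambda>_. 0)" by blast
      define mu where "mu k j = w k (g j)" for k j
      have "Gpt B n (\<lambda>k v. if f v = 0 then 1 else mu k (f v)) = Gpt B n w"
      proof
        fix "is" show "Gpt B n (\<lambda>k v. if f v = 0 then 1 else mu k (f v)) is = Gpt B n w is"
        proof (cases "is \<in> B")
          case True
          have "(if f (is ! k) = 0 then 1 else mu k (f (is ! k))) = w k (is ! k)" if k: "k < n" for k
          proof -
            have mem: "is ! k \<in> set lam" using Bmem[OF True] k by (metis nth_mem)
            show ?thesis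
            proof (cases "f (is ! k) = 0")
              case True
              have "c \<in> set lam" "f c = 0" using hc k by auto
              then have "is ! k = c" using True mem injf by (metis inj_onD)
              then show ?thesis using True w(1) k by simp
            qed (simp add: mu_def gf mem)
          qed
          then show ?thesis using True unfolding Gpt_def by (auto intro!: prod.cong)
        qed (simp add: Gpt_def)
      qed
      then have xe: "x = \<Phi> (monomial_point n nu mu)" using w Phi_mp by simp
      have "monomial_point n nu mu \<noteq> (\<lambda>_. 0)" using w(3) xe by (auto simp: \<Phi>_def)
      then have "monomial_point n nu mu \<in> S_nu" unfolding S_nu_def by blast
      then show "x \<in> \<Phi> ` S_nu" using xe by blast
    qed
  qed
  have Bne: "B \<noteq> {}" using lamB by blast
  have "M_var n lam = proj_zariski_closure B S_lam" unfolding M_var_def S_lam_def B_def ..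
  also have "\<dots> = proj_zariski_closure B {x. (\<exists>w. x = Gpt B n w) \<and> x \<noteq> (\<lambda>_. 0)}"
    unfolding S_lam_eq by (rule key[OF Bne])
  also have "\<dots> = proj_zariski_closure B (\<Phi> ` S_nu)"
    unfolding PhiS by (rule key[OF Bne, symmetric])
  also have "\<dots> = \<Phi> ` proj_zariski_closure A S_nu"
    unfolding \<Phi>_def by (rule transport[where A=A and B=B and S=S_nu and \<tau>=\<tau>]) (use bt AB suppS in auto)
  also have "\<dots> = \<Phi> ` M_var n nu" unfolding M_var_def A_def S_nu_def ..
  finally have M: "M_var n lam = \<Phi> ` M_var n nu" .
  have c1: "card (Nset n lam) = card (Nset n (reduction lam f))"
    using bij_betw_same_card[OF bijB] unfolding A_def B_def nu_def .
  have c2: "bij_betw (map f) (Nset n lam) (Nset n (reduction lam f))"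
    using bijB unfolding A_def B_def nu_def .
  show ?thesis unfolding Phi_eq using c1 c2 M unfolding nu_def by blast
qed

end
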